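(* Let $d\ge2$ and $1\le N\le M$ be integers with $d\mid(M-N)$. For $\boldsymbol\theta=(\theta_1,\dots,\theta_{d-1})\in[0,2\pi)^{d-1}$ let $U_{\boldsymbol\theta}=|0\rangle\langle0|+\sum_{k=1}^{d-1}e^{-i\theta_k}|k\rangle\langle k|$ and $|e_{\boldsymbol\theta}\rangle=d^{-1/2}\big(|0\rangle+\sum_{k=1}^{d-1}e^{-i\theta_k}|k\rangle\big)$. Then there exist a finite-dimensional Hilbert space $\mathcal H_A$, a state $\sigma$ on $(\mathbb C^d)^{\otimes N}\otimes\mathcal H_A\otimes(\mathbb C^d)^{\otimes M}$ and a quantum channel $\mathcal C$ from $(\mathbb C^d)^{\otimes N}\otimes\mathcal H_A\otimes(\mathbb C^d)^{\otimes M}$ to $(\mathbb C^d)^{\otimes M}$ such that for all $\boldsymbol\theta$, $$\langle e_{\boldsymbol\theta}|^{\otimes M}\,\mathcal C\big((U_{\boldsymbol\theta}^{\otimes N}\otimes I)\sigma(U_{\boldsymbol\theta}^{\otimes N}\otimes I)^\dagger\big)\,|e_{\boldsymbol\theta}\rangle^{\otimes M}\ge1-2(M+1)^{\frac{d(d-1)}{2}}\exp\!\Big[-\frac{2N^2}{d^2M}\Big].$$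
   Context: $\{|0\rangle,\dots,|d-1\rangle\}$ is the computational basis of $\mathbb C^d$; $U_{\boldsymbol\theta}^{\otimes N}$ acts on the factor $(\mathbb C^d)^{\otimes N}$ and $I$ on the remaining factors. *)

theory Defs
  imports "Jordan_Normal_Form.Matrix"
begin

definition adj :: "complex mat \<Rightarrow> complex mat" where
  "adj A = mat (dim_col A) (dim_row A) (\<lambda>(i,j). cnj (A $$ (j,i)))"

(* Kronecker (tensor) product; index i of A\<otimes>B corresponds to (i div dim B, i mod dim B) *)
definition kron :: "complex mat \<Rightarrow> complex mat \<Rightarrow> complex mat" where
  "kron A B = mat (dim_row A * dim_row B) (dim_col A * dim_col B)
     (\<lambda>(i,j). A $$ (i div dim_row B, j div dim_col B) * B $$ (i mod dim_row B, j mod dim_col B))"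

fun kron_pow :: "nat \<Rightarrow> complex mat \<Rightarrow> complex mat" where
  "kron_pow 0 A = 1\<^sub>m 1"
| "kron_pow (Suc n) A = kron A (kron_pow n A)"

definition psd :: "nat \<Rightarrow> complex mat \<Rightarrow> bool" where
  "psd n A \<longleftrightarrow> A \<in> carrier_mat n n \<and>
     (\<forall>v :: nat \<Rightarrow> complex. let q = (\<Sum>i<n. \<Sum>j<n. cnj (v i) * A $$ (i,j) * v j)
                                in Im q = 0 \<and> Re q \<ge> 0)"

definition density :: "nat \<Rightarrow> complex mat \<Rightarrow> bool" where
  "density n \<rho> \<longleftrightarrow> psd n \<rho> \<and> (\<Sum>i<n. \<rho> $$ (i,i)) = 1"

definition msum :: "nat \<Rightarrow> nat \<Rightarrow> nat \<Rightarrow> (nat \<Rightarrow> complex mat) \<Rightarrow> complex mat" where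
  "msum n m K f = mat n m (\<lambda>(i,j). \<Sum>k<K. f k $$ (i,j))"

(* quantum channel (CPTP map) from operators on C^din to operators on C^dout,
   given in Kraus form: C(\<rho>) = \<Sum>_k K_k \<rho> K_k^\<dagger> with \<Sum>_k K_k^\<dagger> K_k = I *)
definition is_channel :: "nat \<Rightarrow> nat \<Rightarrow> (complex mat \<Rightarrow> complex mat) \<Rightarrow> bool" where
  "is_channel din dout C \<longleftrightarrow>
     (\<exists>Ks :: complex mat list.
        (\<forall>K \<in> set Ks. K \<in> carrier_mat dout din) \<and>
        msum din din (length Ks) (\<lambda>k. adj (Ks ! k) * Ks ! k) = 1\<^sub>m din \<and>
        (\<forall>\<rho> \<in> carrier_mat din din.
            C \<rho> = msum dout dout (length Ks) (\<lambda>k. Ks ! k * \<rho> * adj (Ks ! k))))"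

definition phase :: "(nat \<Rightarrow> real) \<Rightarrow> nat \<Rightarrow> complex" where
  "phase \<theta> k = (if k = 0 then 1 else cis (- \<theta> k))"

definition U_theta :: "nat \<Rightarrow> (nat \<Rightarrow> real) \<Rightarrow> complex mat" where
  "U_theta d \<theta> = mat d d (\<lambda>(i,j). if i = j then phase \<theta> i else 0)"

definition e_theta :: "nat \<Rightarrow> (nat \<Rightarrow> real) \<Rightarrow> complex mat" where
  "e_theta d \<theta> = mat d 1 (\<lambda>(i,j). phase \<theta> i / complex_of_real (sqrt (real d)))"

definition expval :: "complex mat \<Rightarrow> complex mat \<Rightarrow> complex" where
  "expval \<psi> A = (adj \<psi> * A * \<psi>) $$ (0,0)"

end

theory Submission
  imports Defs "HOL-Probability.Hoeffding"
begin

fun cnt :: "nat \<Rightarrow> nat \<Rightarrow> nat \<Rightarrow> nat \<Rightarrow> nat" where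
  "cnt d k 0 x = 0"
| "cnt d k (Suc n) x = (if x div d ^ n = k then 1 else 0) + cnt d k n (x mod d ^ n)"

fun Ph :: "nat \<Rightarrow> (nat \<Rightarrow> real) \<Rightarrow> nat \<Rightarrow> nat \<Rightarrow> complex" where
  "Ph d \<theta> 0 x = 1"
| "Ph d \<theta> (Suc n) x = phase \<theta> (x div d ^ n) * Ph d \<theta> n (x mod d ^ n)"

lemma sum_split_mult:
  fixes g :: "nat \<Rightarrow> 'a::comm_monoid_add"
  shows "(\<Sum>i<m*r. g i) = (\<Sum>a<m. \<Sum>b<r. g (a*r+b))"
proof (induction m)
  case 0 then show ?case by simp
next
  case (Suc m)
  have "(\<Sum>i<Suc m * r. g i) = (\<Sum>i\<in>{0..<m*r+r}. g i)"
    by (simp add: lessThan_atLeast0 add.commute)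
  also have "\<dots> = (\<Sum>i\<in>{0..<m*r}. g i) + (\<Sum>i\<in>{m*r..<m*r+r}. g i)"
    by (rule sum.atLeastLessThan_concat[symmetric]) auto
  also have "(\<Sum>i\<in>{m*r..<m*r+r}. g i) = (\<Sum>b<r. g (m*r+b))"
  proof -
    have "(\<Sum>i\<in>{m*r..<m*r+r}. g i) = (\<Sum>i\<in>{0+m*r..<r+m*r}. g i)" by (simp add: add.commute)
    also have "\<dots> = (\<Sum>b\<in>{0..<r}. g (b+m*r))" by (rule sum.shift_bounds_nat_ivl)
    finally show ?thesis by (simp add: lessThan_atLeast0 add.commute)
  qed
  finally show ?case using Suc by (simp add: lessThan_atLeast0)
qed

lemma div_mod_eqI: "x div m = y div m \<Longrightarrow> x mod m = y mod m \<Longrightarrow> x = (y::nat)"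
  by (metis div_mult_mod_eq)

lemma cnt_sum: "x < d ^ n \<Longrightarrow> (\<Sum>k<d. cnt d k n x) = n"
proof (induction n arbitrary: x)
  case 0 then show ?case by simp
next
  case (Suc n)
  have pos: "d ^ n > 0" using Suc.prems by (cases "d ^ n") auto
  have h: "x div d ^ n < d" using Suc.prems pos by (simp add: div_less_iff_less_mult mult.commute)
  have "(\<Sum>k<d. cnt d k (Suc n) x) = (\<Sum>k<d. (if x div d ^ n = k then 1 else 0)) + (\<Sum>k<d. cnt d k n (x mod d ^ n))"
    by (simp add: sum.distrib)
  also have "\<dots> = 1 + n" using h Suc.IH[of "x mod d ^ n"] pos by simp
  finally show ?case by simp
qed

lemma cnt_exists:
  assumes "(\<Sum>k<d. c k) = n"
  shows "\<exists>x<d ^ n. \<forall>k<d. cnt d k n x = c k"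
  using assms
proof (induction n arbitrary: c)
  case 0
  then have "\<forall>k<d. c k = 0" by simp
  then show ?case by auto
next
  case (Suc n)
  have "\<exists>h<d. c h > 0"
  proof (rule ccontr)
    assume "\<not> (\<exists>h<d. c h > 0)"
    then have "\<forall>k<d. c k = 0" by auto
    then have "(\<Sum>k<d. c k) = 0" by simp
    with Suc.prems show False by simp
  qed
  then obtain h where h: "h < d" "c h > 0" by blast
  define c' where "c' k = c k - (if k = h then 1 else 0)" for k
  have cc: "c k = c' k + (if k = h then 1 else 0)" for k using h by (auto simp: c'_def)
  have "(\<Sum>k<d. c k) = (\<Sum>k<d. c' k) + 1"
    by (subst cc) (simp add: sum.distrib h)
  then have "(\<Sum>k<d. c' k) = n" using Suc.prems by simp
  from Suc.IH[OF this] obtain y where y: "y < d ^ n" "\<forall>k<d. cnt d k n y = c' k" by blast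
  have pos: "d ^ n > 0" using h by simp
  define x where "x = h * d ^ n + y"
  have "x < d ^ Suc n"
  proof -
    have "x < h * d ^ n + d ^ n" using y unfolding x_def by simp
    also have "\<dots> = Suc h * d ^ n" by simp
    also have "\<dots> \<le> d * d ^ n" using h by (intro mult_le_mono1) simp
    finally show ?thesis by simp
  qed
  moreover have "x div d ^ n = h" "x mod d ^ n = y"
    using y pos unfolding x_def by auto
  ultimately show ?case using y cc
    by (intro exI[of _ x]) (auto simp: add.commute)
qed

lemma norm_phase: "norm (phase \<theta> k) = 1"
  by (simp add: phase_def)

lemma norm_Ph: "norm (Ph d \<theta> n x) = 1"
  by (induction n arbitrary: x) (simp_all add: norm_mult norm_phase)

lemma Ph_cnt: "x < d ^ n \<Longrightarrow> Ph d \<theta> n x = (\<Prod>k<d. phase \<theta> k ^ cnt d k n x)"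
proof (induction n arbitrary: x)
  case 0 then show ?case by simp
next
  case (Suc n)
  have pos: "d ^ n > 0" using Suc.prems by (cases "d ^ n") auto
  define h where "h = x div d ^ n"
  have h: "h < d" using Suc.prems pos by (simp add: h_def div_less_iff_less_mult mult.commute)
  have "(\<Prod>k<d. phase \<theta> k ^ cnt d k (Suc n) x)
      = (\<Prod>k<d. (if k = h then phase \<theta> k else 1) * phase \<theta> k ^ cnt d k n (x mod d ^ n))"
    by (intro prod.cong) (auto simp: h_def power_add)
  also have "\<dots> = phase \<theta> h * (\<Prod>k<d. phase \<theta> k ^ cnt d k n (x mod d ^ n))"
    by (simp add: prod.distrib h)
  also have "\<dots> = Ph d \<theta> (Suc n) x" using Suc.IH[of "x mod d ^ n"] pos by (simp add: h_def)
  finally show ?case by simp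
qed

lemma count_cnt:
  assumes "k < d"
  shows "card {z. z < d ^ n \<and> cnt d k n z = j} = (n choose j) * (d - 1) ^ (n - j)"
  using assms
proof (induction n arbitrary: j)
  case 0 then show ?case by (cases j) (auto simp: card_eq_0_iff)
next
  case (Suc n)
  have pos: "d ^ n > 0" using Suc.prems by simp
  have cs: "card {z. z < m \<and> Q z} = (\<Sum>z<m. if Q z then 1 else 0)" for m :: nat and Q
  proof -
    have "(\<Sum>z<m. if Q z then 1 else 0) = (\<Sum>z\<in>{z\<in>{..<m}. Q z}. (1::nat))"
      by (rule sum.inter_filter[symmetric]) simp
    also have "\<dots> = card {z\<in>{..<m}. Q z}" by simp
    also have "card {z\<in>{..<m}. Q z} = card {z. z < m \<and> Q z}" by (rule arg_cong[where f=card]) auto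
    finally show ?thesis by simp
  qed
  have "card {z. z < d ^ Suc n \<and> cnt d k (Suc n) z = j}
      = (\<Sum>z<d * d ^ n. if cnt d k (Suc n) z = j then 1 else 0)" by (simp add: cs)
  also have "\<dots> = (\<Sum>a<d. \<Sum>b<d ^ n. if (if a = k then 1 else 0) + cnt d k n b = j then 1 else 0)"
    by (subst sum_split_mult) (simp add: pos)
  also have "\<dots> = (\<Sum>a<d. if a = k then card {b. b < d ^ n \<and> cnt d k n b + 1 = j}
                               else card {b. b < d ^ n \<and> cnt d k n b = j})"
    by (intro sum.cong) (auto simp: cs)
  also have "\<dots> = card {b. b < d ^ n \<and> cnt d k n b + 1 = j} + (d - 1) * card {b. b < d ^ n \<and> cnt d k n b = j}"
  proof -
    have "(\<Sum>a<d. if a = k then card {b. b < d ^ n \<and> cnt d k n b + 1 = j}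
                               else card {b. b < d ^ n \<and> cnt d k n b = j})
       = (\<Sum>a\<in>insert k ({..<d} - {k}). if a = k then card {b. b < d ^ n \<and> cnt d k n b + 1 = j}
                               else card {b. b < d ^ n \<and> cnt d k n b = j})"
      using Suc.prems by (intro sum.cong) auto
    also have "\<dots> = card {b. b < d ^ n \<and> cnt d k n b + 1 = j} + (d - 1) * card {b. b < d ^ n \<and> cnt d k n b = j}"
      using Suc.prems by (subst sum.insert) (auto simp: card_Diff_singleton)
    finally show ?thesis .
  qed
  also have "\<dots> = (Suc n choose j) * (d - 1) ^ (Suc n - j)"
  proof (cases j)
    case 0
    then show ?thesis using Suc.IH[of 0] Suc.prems by simp
  next
    case (Suc j')
    have e1: "{b. b < d ^ n \<and> cnt d k n b + 1 = j} = {b. b < d ^ n \<and> cnt d k n b = j'}"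
      using Suc by auto
    show ?thesis
    proof (cases "j' < n")
      case True
      have "(d - 1) * (d - 1) ^ (n - Suc j') = (d - 1) ^ (n - j')"
        using True by (metis Suc_diff_Suc power_Suc)
      then show ?thesis using Suc e1 Suc.IH[of j'] Suc.IH[of "Suc j'"] Suc.prems
        by (simp add: add_mult_distrib add_mult_distrib2 mult.assoc mult.left_commute)
    next
      case False
      then show ?thesis using Suc e1 Suc.IH[of j'] Suc.IH[of "Suc j'"] Suc.prems
        by simp
    qed
  qed
  finally show ?case .
qed
definition outer :: "nat \<Rightarrow> (nat \<Rightarrow> complex) \<Rightarrow> complex mat" where
  "outer n u = Matrix.mat n n (\<lambda>(i,j). u i * cnj (u j))"

definition mv :: "complex mat \<Rightarrow> (nat \<Rightarrow> complex) \<Rightarrow> nat \<Rightarrow> complex" where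
  "mv A u = (\<lambda>a. \<Sum>i<dim_col A. A $$ (a,i) * u i)"

lemma outer_carrier[simp]: "outer n u \<in> carrier_mat n n"
  by (simp add: outer_def)

lemma adj_carrier: "A \<in> carrier_mat m n \<Longrightarrow> adj A \<in> carrier_mat n m"
  by (simp add: adj_def)

lemma sum_times_cnj_sum:
  "(\<Sum>i\<in>I. f i) * cnj (\<Sum>j\<in>J. g j) = (\<Sum>j\<in>J. \<Sum>i\<in>I. f i * cnj (g j))"
proof -
  have "(\<Sum>i\<in>I. f i) * cnj (\<Sum>j\<in>J. g j) = (\<Sum>i\<in>I. f i) * (\<Sum>j\<in>J. cnj (g j))"
    by (simp add: cnj_sum)
  also have "\<dots> = (\<Sum>j\<in>J. (\<Sum>i\<in>I. f i) * cnj (g j))" by (rule sum_distrib_left)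
  also have "\<dots> = (\<Sum>j\<in>J. \<Sum>i\<in>I. f i * cnj (g j))" by (simp add: sum_distrib_right)
  finally show ?thesis .
qed

lemma conj_outer:
  assumes A: "A \<in> carrier_mat m n"
  shows "A * outer n u * adj A = outer m (mv A u)"
proof (rule eq_matI)
  show "dim_row (A * outer n u * adj A) = dim_row (outer m (mv A u))" using A by (simp add: outer_def)
  show "dim_col (A * outer n u * adj A) = dim_col (outer m (mv A u))" using A by (simp add: outer_def adj_def)
  fix a b assume ab: "a < dim_row (outer m (mv A u))" "b < dim_col (outer m (mv A u))"
  then have a: "a < m" and b: "b < m" by (auto simp: outer_def)
  have "(A * outer n u * adj A) $$ (a, b) = (\<Sum>j<n. (\<Sum>i<n. A $$ (a,i) * (u i * cnj (u j))) * cnj (A $$ (b,j)))"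
    using A a b by (simp add: index_mult_mat scalar_prod_def adj_def outer_def lessThan_atLeast0)
  also have "\<dots> = (\<Sum>j<n. \<Sum>i<n. (A $$ (a,i) * u i) * cnj (A $$ (b,j) * u j))"
    by (simp add: sum_distrib_left sum_distrib_right mult_ac)
  also have "\<dots> = (\<Sum>i<n. A $$ (a,i) * u i) * cnj (\<Sum>j<n. A $$ (b,j) * u j)"
    by (rule sum_times_cnj_sum[symmetric])
  also have "\<dots> = outer m (mv A u) $$ (a,b)"
    using A a b by (simp add: outer_def mv_def)
  finally show "(A * outer n u * adj A) $$ (a, b) = outer m (mv A u) $$ (a, b)" .
qed

lemma expval_msum_outer:
  assumes psi: "\<psi> \<in> carrier_mat m 1"
  shows "expval \<psi> (msum m m K (\<lambda>k. outer m (w k))) =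
         (\<Sum>k<K. (\<Sum>a<m. cnj (\<psi> $$ (a,0)) * w k a) * cnj (\<Sum>a<m. cnj (\<psi> $$ (a,0)) * w k a))"
proof -
  have "expval \<psi> (msum m m K (\<lambda>k. outer m (w k)))
      = (\<Sum>b<m. (\<Sum>a<m. cnj (\<psi> $$ (a,0)) * (\<Sum>k<K. w k a * cnj (w k b))) * \<psi> $$ (b,0))"
    using psi by (simp add: expval_def index_mult_mat scalar_prod_def adj_def msum_def outer_def lessThan_atLeast0)
  also have "\<dots> = (\<Sum>b<m. \<Sum>a<m. \<Sum>k<K. (cnj (\<psi> $$ (a,0)) * w k a) * cnj (cnj (\<psi> $$ (b,0)) * w k b))"
    by (simp add: sum_distrib_left sum_distrib_right mult_ac)
  also have "\<dots> = (\<Sum>b<m. \<Sum>k<K. \<Sum>a<m. (cnj (\<psi> $$ (a,0)) * w k a) * cnj (cnj (\<psi> $$ (b,0)) * w k b))"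
    by (rule sum.cong[OF refl], rule sum.swap)
  also have "\<dots> = (\<Sum>k<K. \<Sum>b<m. \<Sum>a<m. (cnj (\<psi> $$ (a,0)) * w k a) * cnj (cnj (\<psi> $$ (b,0)) * w k b))"
    by (rule sum.swap)
  also have "\<dots> = (\<Sum>k<K. (\<Sum>a<m. cnj (\<psi> $$ (a,0)) * w k a) * cnj (\<Sum>a<m. cnj (\<psi> $$ (a,0)) * w k a))"
    by (rule sum.cong[OF refl], rule sum_times_cnj_sum[symmetric])
  finally show ?thesis .
qed

lemma psd_outer: "psd n (outer n u)"
proof -
  have "(\<Sum>i<n. \<Sum>j<n. cnj (v i) * outer n u $$ (i,j) * v j)
       = complex_of_real ((cmod (\<Sum>i<n. cnj (v i) * u i))\<^sup>2)" for v
  proof -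
    have "(\<Sum>i<n. \<Sum>j<n. cnj (v i) * outer n u $$ (i,j) * v j)
        = (\<Sum>i<n. \<Sum>j<n. (cnj (v i) * u i) * cnj (cnj (v j) * u j))"
      by (intro sum.cong refl) (simp add: outer_def mult_ac)
    also have "\<dots> = (\<Sum>j<n. \<Sum>i<n. (cnj (v i) * u i) * cnj (cnj (v j) * u j))"
      by (rule sum.swap)
    also have "\<dots> = (\<Sum>i<n. cnj (v i) * u i) * cnj (\<Sum>i<n. cnj (v i) * u i)"
      by (rule sum_times_cnj_sum[symmetric])
    also have "\<dots> = complex_of_real ((cmod (\<Sum>i<n. cnj (v i) * u i))\<^sup>2)"
      by (rule complex_norm_square[symmetric])
    finally show ?thesis .
  qed
  then show ?thesis by (simp add: psd_def Let_def)
qed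

lemma msum_cong:
  assumes "\<And>k. k < K \<Longrightarrow> f k = g k"
  shows "msum n m K f = msum n m K g"
  unfolding msum_def using assms by (intro eq_matI) auto

lemma sum_indicator_const:
  assumes "A \<subseteq> {..<(r::nat)}"
  shows "(\<Sum>a<r. if a \<in> A then c else 0) = of_nat (card A) * (c :: 'a :: semiring_1)"
proof -
  have e: "{a\<in>{..<r}. a \<in> A} = A" using assms by auto
  have "(\<Sum>a<r. if a \<in> A then c else 0) = (\<Sum>a\<in>{a\<in>{..<r}. a \<in> A}. c)"
    by (rule sum.inter_filter[symmetric]) simp
  then show ?thesis unfolding e by simp
qed
lemma kron_carrier: "kron A B \<in> carrier_mat (dim_row A * dim_row B) (dim_col A * dim_col B)"
  by (simp add: kron_def)

lemma kron_index:
  assumes "i < dim_row A * dim_row B" "j < dim_col A * dim_col B"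
  shows "kron A B $$ (i,j) = A $$ (i div dim_row B, j div dim_col B) * B $$ (i mod dim_row B, j mod dim_col B)"
  using assms by (simp add: kron_def)

lemma kron_pow_carrier: "A \<in> carrier_mat r c \<Longrightarrow> kron_pow n A \<in> carrier_mat (r ^ n) (c ^ n)"
  by (induction n) (auto simp: kron_def)

lemma U_carrier: "U_theta d \<theta> \<in> carrier_mat d d"
  by (simp add: U_theta_def)

lemma e_carrier: "e_theta d \<theta> \<in> carrier_mat d 1"
  by (simp add: e_theta_def)

lemma kron_pow_U:
  assumes "x < d ^ n" "y < d ^ n"
  shows "kron_pow n (U_theta d \<theta>) $$ (x,y) = (if x = y then Ph d \<theta> n x else 0)"
  using assms
proof (induction n arbitrary: x y)
  case 0 then show ?case by simp
next
  case (Suc n)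
  have dims: "dim_row (kron_pow n (U_theta d \<theta>)) = d ^ n" "dim_col (kron_pow n (U_theta d \<theta>)) = d ^ n"
    using kron_pow_carrier[OF U_carrier, of n d \<theta>] by auto
  have pos: "d ^ n > 0" using Suc.prems by (cases "d ^ n") auto
  have hx: "x div d ^ n < d" and hy: "y div d ^ n < d" using Suc.prems pos by (simp_all add: div_less_iff_less_mult mult.commute)
  have "kron_pow (Suc n) (U_theta d \<theta>) $$ (x,y) =
        U_theta d \<theta> $$ (x div d ^ n, y div d ^ n) * kron_pow n (U_theta d \<theta>) $$ (x mod d ^ n, y mod d ^ n)"
    using Suc.prems dims by (simp add: kron_def U_theta_def mult.commute)
  also have "\<dots> = (if x = y then Ph d \<theta> (Suc n) x else 0)"
    using hx hy pos Suc.IH[of "x mod d ^ n" "y mod d ^ n"]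
    by (auto simp: U_theta_def dest: div_mod_eqI)
  finally show ?case .
qed

lemma kron_pow_e:
  assumes "x < d ^ n"
  shows "kron_pow n (e_theta d \<theta>) $$ (x,0) = Ph d \<theta> n x / complex_of_real (sqrt (real d)) ^ n"
  using assms
proof (induction n arbitrary: x)
  case 0 then show ?case by simp
next
  case (Suc n)
  have dims: "dim_row (kron_pow n (e_theta d \<theta>)) = d ^ n" "dim_col (kron_pow n (e_theta d \<theta>)) = 1"
    using kron_pow_carrier[OF e_carrier, of n d \<theta>] by auto
  have pos: "d ^ n > 0" using Suc.prems by (cases "d ^ n") auto
  have hx: "x div d ^ n < d" using Suc.prems pos by (simp_all add: div_less_iff_less_mult mult.commute)
  have "kron_pow (Suc n) (e_theta d \<theta>) $$ (x,0) =
        e_theta d \<theta> $$ (x div d ^ n, 0) * kron_pow n (e_theta d \<theta>) $$ (x mod d ^ n, 0)"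
    using Suc.prems dims by (simp add: kron_def e_theta_def mult.commute)
  also have "\<dots> = Ph d \<theta> (Suc n) x / complex_of_real (sqrt (real d)) ^ Suc n"
    using hx pos Suc.IH[of "x mod d ^ n"] by (simp add: e_theta_def)
  finally show ?case .
qed
lemma tail_bound:
  assumes d: "d \<ge> 2" and N: "1 \<le> N" "N \<le> M" and ds: "d * s = M - N"
  shows "real (card {z. z < d ^ M \<and> (\<forall>k<d. s \<le> cnt d k M z)}) / real d ^ M
           \<ge> 1 - real d * exp (- (2 * real N ^ 2) / (real d ^ 2 * real M))"
proof -
  define G where "G = {z. z < d ^ M \<and> (\<forall>k<d. s \<le> cnt d k M z)}"
  define Bad where "Bad k = {z. z < d ^ M \<and> cnt d k M z < s}" for k
  define B where "B = (\<Sum>j<s. (M choose j) * (d - 1) ^ (M - j))"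
  define p where "p = 1 / real d"
  define E where "E = exp (- (2 * real N ^ 2) / (real d ^ 2 * real M))"
  have "s \<le> d * s" using mult_le_mono1[of 1 d s] d by simp
  then have sM: "s \<le> M" using ds by linarith
  have cardBad: "card (Bad k) = B" if k: "k < d" for k
  proof -
    have "Bad k = (\<Union>j<s. {z. z < d ^ M \<and> cnt d k M z = j})" by (auto simp: Bad_def)
    moreover have "card (\<Union>j<s. {z. z < d ^ M \<and> cnt d k M z = j}) = (\<Sum>j<s. card {z. z < d ^ M \<and> cnt d k M z = j})"
      by (rule card_UN_disjoint) (auto intro: finite_Collect_conjI)
    ultimately have "card (Bad k) = (\<Sum>j<s. card {z. z < d ^ M \<and> cnt d k M z = j})" by simp
    also have "\<dots> = B" unfolding B_def using count_cnt[OF k] by simp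
    finally show ?thesis .
  qed
  have cover: "{..<d ^ M} \<subseteq> G \<union> (\<Union>k<d. Bad k)"
    by (auto simp: G_def Bad_def not_le)
  have "d ^ M \<le> card (G \<union> (\<Union>k<d. Bad k))"
    using card_mono[OF _ cover] by (simp add: G_def Bad_def)
  also have "\<dots> \<le> card G + card (\<Union>k<d. Bad k)" by (rule card_Un_le)
  also have "card (\<Union>k<d. Bad k) \<le> (\<Sum>k<d. card (Bad k))" by (rule card_UN_le) simp
  also have "(\<Sum>k<d. card (Bad k)) = d * B" using cardBad by simp
  finally have main: "d ^ M \<le> card G + d * B" by simp
  have dpos: "real d > 0" using d by simp
  have p01: "p \<in> {0..1}" using d by (auto simp: p_def)
  have Mpos: "M > 0" using N by simp
  have BB: "real B / real d ^ M = measure_pmf.prob (binomial_pmf M p) {..<s}"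
  proof -
    have "measure_pmf.prob (binomial_pmf M p) {..<s} = (\<Sum>j<s. pmf (binomial_pmf M p) j)"
      by (simp add: measure_measure_pmf_finite)
    also have "\<dots> = (\<Sum>j<s. real (M choose j) * real (d - 1) ^ (M - j) / real d ^ M)"
    proof (intro sum.cong refl)
      fix j assume "j \<in> {..<s}"
      then have jM: "j \<le> M" using sM by simp
      have "real d ^ M = real d ^ j * real d ^ (M - j)" using jM by (simp add: power_add[symmetric])
      moreover have "1 - p = real (d - 1) / real d" using d by (simp add: p_def field_simps of_nat_diff)
      ultimately show "pmf (binomial_pmf M p) j = real (M choose j) * real (d - 1) ^ (M - j) / real d ^ M"
        using p01 dpos by (simp add: p_def power_divide field_simps)
    qed
    also have "\<dots> = real B / real d ^ M" by (simp add: B_def sum_divide_distrib)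
    finally show ?thesis by simp
  qed
  have "measure_pmf.prob (binomial_pmf M p) {..<s} \<le> measure_pmf.prob (binomial_pmf M p) {x. real x \<le> real M * p - real N / real d}"
  proof (rule measure_pmf.finite_measure_mono)
    have "real M * p - real N / real d = real s"
    proof -
      have "real d * real s = real M - real N" using ds N by (metis of_nat_diff of_nat_mult)
      then show ?thesis using dpos by (simp add: p_def field_simps)
    qed
    then show "{..<s} \<subseteq> {x. real x \<le> real M * p - real N / real d}" by auto
  qed simp
  also have "\<dots> \<le> exp (- 2 * (real N / real d)\<^sup>2 / real M)"
    using binomial_distribution.prob_le[of p M "real N / real d"] p01 Mpos
    by (simp add: binomial_distribution_def)
  also have "\<dots> = E" by (simp add: E_def power_divide)
  finally have BE: "real B / real d ^ M \<le> E" using BB by simp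
  have ineq: "real d ^ M \<le> real (card G) + real d * real B"
    using main by (metis of_nat_add of_nat_le_iff of_nat_mult of_nat_power)
  have Dpos: "real d ^ M > 0" using dpos by simp
  have "1 - real (card G) / real d ^ M = (real d ^ M - real (card G)) / real d ^ M"
    using Dpos by (simp add: field_simps)
  also have "\<dots> \<le> (real d * real B) / real d ^ M"
    using ineq Dpos by (intro divide_right_mono) auto
  also have "\<dots> = real d * (real B / real d ^ M)" by simp
  also have "\<dots> \<le> real d * E" using BE dpos by (intro mult_left_mono) auto
  finally show ?thesis unfolding G_def E_def by simp
qed

lemma d_le_bound:
  assumes "d \<ge> 2" and M1: "M \<ge> 1"
  shows "real d \<le> 2 * real (M + 1) ^ (d * (d - 1) div 2)"
proof -
  have "d - 1 \<le> d * (d - 1) div 2"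
  proof -
    have "(2 * (d - 1)) div 2 \<le> d * (d - 1) div 2" using assms by (intro div_le_mono mult_le_mono1)
    then show ?thesis by simp
  qed
  have "real d \<le> 2 ^ d" using less_exp[of d] by (metis of_nat_le_iff of_nat_numeral of_nat_power less_imp_le)
  also have "(2::real) ^ d = 2 * 2 ^ (d - 1)"
  proof -
    obtain e where "d = Suc e" using assms by (cases d) auto
    then show ?thesis by simp
  qed
  also have "(2::real) ^ (d - 1) \<le> 2 ^ (d * (d - 1) div 2)" using \<open>d - 1 \<le> _\<close> by (intro power_increasing) auto
  also have "(2::real) ^ (d * (d - 1) div 2) \<le> real (M + 1) ^ (d * (d - 1) div 2)"
    using M1 by (intro power_mono) auto
  finally show ?thesis by simp
qed
theorem mainTheorem7:
  fixes d N M :: nat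
  assumes "d \<ge> 2" and "1 \<le> N" and "N \<le> M" and "d dvd (M - N)"
  shows "\<exists>(dA :: nat) (\<sigma> :: complex mat) (C :: complex mat \<Rightarrow> complex mat).
           dA \<ge> 1 \<and>
           Defs.density (d ^ N * dA * d ^ M) \<sigma> \<and>
           is_channel (d ^ N * dA * d ^ M) (d ^ M) C \<and>
           (\<forall>\<theta> :: nat \<Rightarrow> real. (\<forall>k \<in> {1..d-1}. 0 \<le> \<theta> k \<and> \<theta> k < 2 * pi) \<longrightarrow>
              (let V = kron (kron_pow N (U_theta d \<theta>)) (1\<^sub>m (dA * d ^ M));
                   F = expval (kron_pow M (e_theta d \<theta>)) (C (V * \<sigma> * adj V))
               in Im F = 0 \<and>
                  Re F \<ge> 1 - 2 * real (M + 1) ^ (d * (d - 1) div 2)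
                               * exp (- (2 * real N ^ 2) / (real d ^ 2 * real M))))"
proof -
  note d = assms(1)
  define s where "s = (M - N) div d"
  have ds: "d * s = M - N" using assms(4) by (simp add: s_def)
  define r where "r = d ^ M"
  define n1 where "n1 = d ^ N"
  define din where "din = d ^ N * 1 * d ^ M"
  have din: "din = n1 * r" by (simp add: din_def n1_def r_def)
  have rpos: "r > 0" using d by (simp add: r_def)
  have n1pos: "n1 > 0" using d by (simp add: n1_def)
  have n1r: "n1 \<le> r" using power_increasing[of N M "d"] d assms(3) by (simp add: n1_def r_def)
  define G where "G = {z. z < d ^ M \<and> (\<forall>k<d. s \<le> cnt d k M z)}"
  have Gr: "G \<subseteq> {..<r}" by (auto simp: G_def r_def)
  have finG: "finite G" using Gr finite_subset by blast
  define f where "f z = (SOME x. x < d ^ N \<and> (\<forall>k<d. cnt d k N x + s = cnt d k M z))" for z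
  have f_prop: "f z < n1 \<and> (\<forall>k<d. cnt d k N (f z) + s = cnt d k M z)" if z: "z \<in> G" for z
  proof -
    have zM: "z < d ^ M" and sz: "\<forall>k<d. s \<le> cnt d k M z" using z by (auto simp: G_def)
    have "(\<Sum>k<d. cnt d k M z - s) + d * s = (\<Sum>k<d. (cnt d k M z - s) + s)"
      by (simp add: sum.distrib)
    also have "\<dots> = (\<Sum>k<d. cnt d k M z)" using sz by (intro sum.cong) auto
    also have "\<dots> = M" using cnt_sum[OF zM] .
    finally have "(\<Sum>k<d. cnt d k M z - s) = N" using ds assms(3) by arith
    from cnt_exists[OF this] obtain x where x: "x < d ^ N" "\<forall>k<d. cnt d k N x = cnt d k M z - s" by blast
    then have "\<exists>x. x < d ^ N \<and> (\<forall>k<d. cnt d k N x + s = cnt d k M z)" using sz by (intro exI[of _ x]) auto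
    from someI_ex[OF this] show ?thesis unfolding f_def n1_def .
  qed
  have Gne: "G \<noteq> {}"
  proof -
    define c0 where "c0 (k::nat) = s + (if k = 0 then N else 0)" for k
    have "(\<Sum>k<d. c0 k) = d * s + N" using d by (simp add: c0_def sum.distrib)
    also have "\<dots> = M" using ds assms(3) by arith
    finally have c0sum: "(\<Sum>k<d. c0 k) = M" .
    from cnt_exists[OF c0sum] obtain z where "z < d ^ M" "\<forall>k<d. cnt d k M z = c0 k" by blast
    then have "z \<in> G" by (auto simp: G_def c0_def)
    then show ?thesis by blast
  qed
  have cardG: "card G > 0" using Gne finG by (simp add: card_gt_0_iff)
  define fib where "fib x = {z \<in> G. f z = x}" for x
  have fib_fin: "finite (fib x)" for x using finG by (simp add: fib_def)
  define \<psi>0 where "\<psi>0 x = complex_of_real (sqrt (real (card (fib x)) / real (card G)))" for x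
  define \<phi> where "\<phi> i = (if i mod r = 0 then \<psi>0 (i div r) else 0)" for i
  define \<sigma> where "\<sigma> = outer din \<phi>"
  define wt where "wt x = 1 / sqrt (real (card (fib x)))" for x
  define W where "W a x = (if a \<in> G \<and> f a = x then complex_of_real (wt x) else 0)" for a x
  define E where "E a x = (if a = x \<and> fib x = {} then 1 else (0::complex))" for a x
  define Kr where "Kr k = Matrix.mat r din (\<lambda>(a,i). if i mod r = k mod r then (if k div r = 0 then W a (i div r) else E a (i div r)) else 0)" for k
  define Ks where "Ks = map Kr [0..<2*r]"
  define C where "C = (\<lambda>\<rho>. msum r r (length Ks) (\<lambda>k. Ks ! k * \<rho> * adj (Ks ! k)))"
  have Kr_carrier: "Kr k \<in> carrier_mat r din" for k by (simp add: Kr_def)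
  have sumfib: "(\<Sum>x<n1. card (fib x)) = card G"
  proof -
    have "G = (\<Union>x<n1. fib x)" using f_prop by (auto simp: fib_def)
    moreover have "card (\<Union>x<n1. fib x) = (\<Sum>x<n1. card (fib x))"
      by (rule card_UN_disjoint) (auto simp: fib_def intro: finite_subset[OF _ finG])
    ultimately show ?thesis by simp
  qed
  have psi_sq: "\<psi>0 x * cnj (\<psi>0 x) = complex_of_real (real (card (fib x)) / real (card G))" for x
  proof -
    have "\<psi>0 x * cnj (\<psi>0 x) = complex_of_real (sqrt (real (card (fib x)) / real (card G)) * sqrt (real (card (fib x)) / real (card G)))"
      unfolding \<psi>0_def complex_cnj_complex_of_real of_real_mult by (rule refl)
    also have "sqrt (real (card (fib x)) / real (card G)) * sqrt (real (card (fib x)) / real (card G)) = real (card (fib x)) / real (card G)"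
      by (rule real_sqrt_mult_self[THEN trans]) simp
    finally show ?thesis .
  qed
  have dens: "Defs.density din \<sigma>"
  proof -
    have "(\<Sum>i<din. \<sigma> $$ (i,i)) = (\<Sum>i<n1*r. \<phi> i * cnj (\<phi> i))"
      unfolding din \<sigma>_def by (intro sum.cong refl) (simp add: outer_def)
    also have "\<dots> = (\<Sum>x<n1. \<Sum>b<r. \<phi> (x*r+b) * cnj (\<phi> (x*r+b)))" by (rule sum_split_mult)
    also have "\<dots> = (\<Sum>x<n1. \<psi>0 x * cnj (\<psi>0 x))"
    proof (intro sum.cong refl)
      fix x
      have "(\<Sum>b<r. \<phi> (x*r+b) * cnj (\<phi> (x*r+b))) = (\<Sum>b<r. if b = 0 then \<psi>0 x * cnj (\<psi>0 x) else 0)"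
        using rpos by (intro sum.cong refl) (auto simp: \<phi>_def)
      also have "\<dots> = \<psi>0 x * cnj (\<psi>0 x)" using rpos by simp
      finally show "(\<Sum>b<r. \<phi> (x*r+b) * cnj (\<phi> (x*r+b))) = \<psi>0 x * cnj (\<psi>0 x)" .
    qed
    also have "\<dots> = complex_of_real ((\<Sum>x<n1. real (card (fib x))) / real (card G))"
      by (simp add: psi_sq sum_divide_distrib)
    also have "(\<Sum>x<n1. real (card (fib x))) = real (card G)"
      using sumfib by (metis of_nat_sum)
    finally show ?thesis using cardG by (simp add: Defs.density_def \<sigma>_def psd_outer)
  qed
  have IW: "(\<Sum>a<r. cnj (W a x) * W a y) = (if x = y \<and> fib x \<noteq> {} then 1 else 0)" if "x < n1" "y < n1" for x y
  proof (cases "x = y")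
    case True
    have fibr: "fib x \<subseteq> {..<r}" using Gr by (auto simp: fib_def)
    have "(\<Sum>a<r. cnj (W a x) * W a y) = (\<Sum>a<r. if a \<in> fib x then complex_of_real (wt x * wt x) else 0)"
      by (intro sum.cong refl) (auto simp: W_def fib_def True)
    also have "\<dots> = of_nat (card (fib x)) * complex_of_real (wt x * wt x)"
      by (rule sum_indicator_const[OF fibr])
    also have "\<dots> = complex_of_real (real (card (fib x)) * (wt x * wt x))" by simp
    also have "real (card (fib x)) * (wt x * wt x) = (if fib x \<noteq> {} then 1 else 0)"
    proof (cases "fib x = {}")
      case False
      then have "real (card (fib x)) > 0" using fib_fin[of x] by (simp add: card_gt_0_iff)
      moreover have "wt x * wt x = 1 / real (card (fib x))"
        unfolding wt_def by simp
      ultimately show ?thesis using False by simp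
    qed simp
    finally show ?thesis using True by simp
  next
    case False
    have "\<forall>a\<in>{..<r}. cnj (W a x) * W a y = 0" using False by (auto simp: W_def)
    then have "(\<Sum>a<r. cnj (W a x) * W a y) = 0" by (rule sum.neutral)
    then show ?thesis using False by simp
  qed
  have IE: "(\<Sum>a<r. cnj (E a x) * E a y) = (if x = y \<and> fib x = {} then 1 else 0)" if "x < n1" "y < n1" for x y
  proof -
    have "(\<Sum>a<r. cnj (E a x) * E a y) = (\<Sum>a<r. if a = x then (if x = y \<and> fib x = {} then 1 else 0) else 0)"
      by (intro sum.cong refl) (auto simp: E_def)
    also have "\<dots> = (if x = y \<and> fib x = {} then 1 else 0)" using that n1r by simp
    finally show ?thesis .
  qed
  have kraus: "msum din din (length Ks) (\<lambda>k. adj (Ks ! k) * Ks ! k) = 1\<^sub>m din"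
  proof (rule eq_matI)
    fix i j assume "i < dim_row (1\<^sub>m din)" "j < dim_col (1\<^sub>m din)"
    then have i: "i < din" and j: "j < din" by auto
    have idiv: "i div r < n1" and jdiv: "j div r < n1" using i j din rpos
      by (simp_all add: div_less_iff_less_mult)
    have imod: "i mod r < r" using rpos by simp
    have entry: "(adj (Kr k) * Kr k) $$ (i,j) = (\<Sum>a<r. cnj (Kr k $$ (a,i)) * Kr k $$ (a,j))" for k
      using i j by (simp add: Kr_def adj_def index_mult_mat scalar_prod_def lessThan_atLeast0)
    have "msum din din (length Ks) (\<lambda>k. adj (Ks ! k) * Ks ! k) $$ (i,j)
        = (\<Sum>k<2*r. (adj (Kr k) * Kr k) $$ (i,j))"
      using i j by (simp add: msum_def Ks_def)
    also have "\<dots> = (\<Sum>t<2. \<Sum>b<r. (adj (Kr (t*r+b)) * Kr (t*r+b)) $$ (i,j))" by (rule sum_split_mult)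
    also have "\<dots> = (\<Sum>t<(2::nat). \<Sum>b<r. if b = i mod r then (if i mod r = j mod r then
                        (if t = 0 then (\<Sum>a<r. cnj (W a (i div r)) * W a (j div r)) else (\<Sum>a<r. cnj (E a (i div r)) * E a (j div r))) else 0) else 0)"
    proof (intro sum.cong refl)
      fix t b :: nat assume t: "t \<in> {..<2}" and b: "b \<in> {..<r}"
      have tm: "(t*r+b) mod r = b" "(t*r+b) div r = t" using b rpos by auto
      have pw: "cnj (Kr (t*r+b) $$ (a,i)) * Kr (t*r+b) $$ (a,j) = (if b = i mod r then (if i mod r = j mod r then
                        (if t = 0 then cnj (W a (i div r)) * W a (j div r) else cnj (E a (i div r)) * E a (j div r)) else 0) else 0)"
        if a: "a < r" for a
        using i j tm a by (auto simp: Kr_def din)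
      have "(adj (Kr (t*r+b)) * Kr (t*r+b)) $$ (i,j) = (\<Sum>a<r. (if b = i mod r then (if i mod r = j mod r then
                        (if t = 0 then cnj (W a (i div r)) * W a (j div r) else cnj (E a (i div r)) * E a (j div r)) else 0) else 0))"
        unfolding entry by (rule sum.cong[OF refl]) (simp add: pw)
      also have "\<dots> = (if b = i mod r then (if i mod r = j mod r then
                        (if t = 0 then (\<Sum>a<r. cnj (W a (i div r)) * W a (j div r)) else (\<Sum>a<r. cnj (E a (i div r)) * E a (j div r))) else 0) else 0)"
        by (cases "b = i mod r"; cases "i mod r = j mod r"; cases "t = 0") simp_all
      finally show "(adj (Kr (t*r+b)) * Kr (t*r+b)) $$ (i,j) = (if b = i mod r then (if i mod r = j mod r then
                        (if t = 0 then (\<Sum>a<r. cnj (W a (i div r)) * W a (j div r)) else (\<Sum>a<r. cnj (E a (i div r)) * E a (j div r))) else 0) else 0)" .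
    qed
    also have "\<dots> = (if i mod r = j mod r then (\<Sum>a<r. cnj (W a (i div r)) * W a (j div r)) + (\<Sum>a<r. cnj (E a (i div r)) * E a (j div r)) else 0)"
      using imod by (simp add: numeral_2_eq_2)
    also have "\<dots> = (if i = j then 1 else 0)"
      using IW[OF idiv jdiv] IE[OF idiv jdiv] by (auto dest: div_mod_eqI)
    also have "\<dots> = 1\<^sub>m din $$ (i,j)" using i j by simp
    finally show "msum din din (length Ks) (\<lambda>k. adj (Ks ! k) * Ks ! k) $$ (i,j) = 1\<^sub>m din $$ (i,j)" .
  qed (simp_all add: msum_def)
  have chan: "is_channel din r C"
    unfolding is_channel_def
    by (intro exI[of _ Ks] conjI kraus ballI) (auto simp: Ks_def Kr_carrier C_def)
  have fid: "Im F = 0 \<and> Re F \<ge> real (card G) / real d ^ M"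
    if F: "F = expval (kron_pow M (e_theta d \<theta>)) (C (V * \<sigma> * adj V))"
       and V: "V = kron (kron_pow N (U_theta d \<theta>)) (1\<^sub>m (1 * d ^ M))" for \<theta> F V
  proof -
    have UN: "kron_pow N (U_theta d \<theta>) \<in> carrier_mat n1 n1"
      using kron_pow_carrier[OF U_carrier, of N d \<theta>] by (simp add: n1_def)
    then have UNd: "dim_row (kron_pow N (U_theta d \<theta>)) = n1" "dim_col (kron_pow N (U_theta d \<theta>)) = n1" by auto
    have Vc: "V \<in> carrier_mat din din" using UNd by (simp add: V kron_def din r_def)
    then have Vd: "dim_col V = din" by auto
    have Vent: "V $$ (a,j) = (if j = a then Ph d \<theta> N (a div r) else 0)" if "a < din" "j < din" for a j
    proof -
      have h1: "a div r < d ^ N" "j div r < d ^ N" using that din rpos by (simp_all add: div_less_iff_less_mult n1_def)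
      have h2: "a mod r < r" "j mod r < r" using rpos by auto
      have eq: "(j = a) = (a div r = j div r \<and> a mod r = j mod r)" by (metis div_mod_eqI)
      have "V $$ (a,j) = kron_pow N (U_theta d \<theta>) $$ (a div r, j div r) * 1\<^sub>m r $$ (a mod r, j mod r)"
        using that UNd by (simp add: V kron_def din r_def)
      also have "\<dots> = (if j = a then Ph d \<theta> N (a div r) else 0)"
        using h1 h2 unfolding eq by (simp add: kron_pow_U)
      finally show ?thesis .
    qed
    define v where "v = mv V \<phi>"
    have v: "v a = Ph d \<theta> N (a div r) * \<phi> a" if "a < din" for a
    proof -
      have "v a = (\<Sum>j<din. (if j = a then Ph d \<theta> N (a div r) * \<phi> j else 0))"
        unfolding v_def mv_def Vd using that by (intro sum.cong refl) (simp add: Vent)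
      also have "\<dots> = Ph d \<theta> N (a div r) * \<phi> a" using that by simp
      finally show ?thesis .
    qed
    have Vs: "V * \<sigma> * adj V = outer din v" unfolding \<sigma>_def v_def by (rule conj_outer[OF Vc])
    define w where "w k = mv (Kr k) v" for k
    have lenKs: "length Ks = 2*r" by (simp add: Ks_def)
    have Cs: "C (V * \<sigma> * adj V) = msum r r (2*r) (\<lambda>k. outer r (w k))"
      unfolding Vs C_def w_def lenKs by (intro msum_cong) (simp add: Ks_def conj_outer[OF Kr_carrier])
    define psiM where "psiM = kron_pow M (e_theta d \<theta>)"
    have psiMc: "psiM \<in> carrier_mat r 1" using kron_pow_carrier[OF e_carrier, of M d \<theta>] by (simp add: psiM_def r_def)
    define \<beta> where "\<beta> k = (\<Sum>a<r. cnj (psiM $$ (a,0)) * w k a)" for k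
    have Fs: "F = (\<Sum>k<2*r. \<beta> k * cnj (\<beta> k))"
      unfolding F Cs psiM_def[symmetric] \<beta>_def by (rule expval_msum_outer[OF psiMc])
    have Fr: "F = complex_of_real (\<Sum>k<2*r. (cmod (\<beta> k))\<^sup>2)"
      unfolding Fs of_real_sum by (rule sum.cong[OF refl], rule complex_norm_square[symmetric])
    have "(cmod (\<beta> 0))\<^sup>2 \<le> (\<Sum>k<2*r. (cmod (\<beta> k))\<^sup>2)"
      using rpos by (intro member_le_sum) auto
    moreover have "(cmod (\<beta> 0))\<^sup>2 = real (card G) / real d ^ M"
    proof -
      define sq where "sq = sqrt (real d)"
      define g where "g = (\<Prod>k<d. phase \<theta> k ^ s)"
      have w0: "w 0 a = (if a \<in> G then Ph d \<theta> N (f a) * complex_of_real (1 / sqrt (real (card G))) else 0)"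
        if a: "a < r" for a
      proof -
        have "w 0 a = (\<Sum>i<n1*r. (if i mod r = 0 then W a (i div r) else 0) * (Ph d \<theta> N (i div r) * \<phi> i))"
          unfolding w_def mv_def using Kr_carrier[of 0] a
          by (intro sum.cong) (auto simp: Kr_def din v)
        also have "\<dots> = (\<Sum>x<n1. \<Sum>b<r. (if (x*r+b) mod r = 0 then W a ((x*r+b) div r) else 0) * (Ph d \<theta> N ((x*r+b) div r) * \<phi> (x*r+b)))"
          by (rule sum_split_mult)
        also have "\<dots> = (\<Sum>x<n1. W a x * (Ph d \<theta> N x * \<psi>0 x))"
        proof (intro sum.cong refl)
          fix x
          have "(\<Sum>b<r. (if (x*r+b) mod r = 0 then W a ((x*r+b) div r) else 0) * (Ph d \<theta> N ((x*r+b) div r) * \<phi> (x*r+b)))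
               = (\<Sum>b<r. if b = 0 then W a x * (Ph d \<theta> N x * \<psi>0 x) else 0)"
            using rpos by (intro sum.cong refl) (auto simp: \<phi>_def)
          also have "\<dots> = W a x * (Ph d \<theta> N x * \<psi>0 x)" using rpos by simp
          finally show "(\<Sum>b<r. (if (x*r+b) mod r = 0 then W a ((x*r+b) div r) else 0) * (Ph d \<theta> N ((x*r+b) div r) * \<phi> (x*r+b)))
                       = W a x * (Ph d \<theta> N x * \<psi>0 x)" .
        qed
        also have "\<dots> = (if a \<in> G then Ph d \<theta> N (f a) * complex_of_real (1 / sqrt (real (card G))) else 0)"
        proof (cases "a \<in> G")
          case True
          have fa: "f a < n1" using f_prop[OF True] by simp
          have "a \<in> fib (f a)" using True by (simp add: fib_def)
          then have cpos: "card (fib (f a)) > 0" using fib_fin by (auto simp: card_gt_0_iff)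
          have "(\<Sum>x<n1. W a x * (Ph d \<theta> N x * \<psi>0 x)) = (\<Sum>x<n1. if x = f a then W a (f a) * (Ph d \<theta> N (f a) * \<psi>0 (f a)) else 0)"
            by (intro sum.cong refl) (auto simp: W_def)
          also have "\<dots> = W a (f a) * (Ph d \<theta> N (f a) * \<psi>0 (f a))" using fa by simp
          also have "\<dots> = Ph d \<theta> N (f a) * complex_of_real (1 / sqrt (real (card (fib (f a)))) * sqrt (real (card (fib (f a))) / real (card G)))"
            using True by (simp add: W_def \<psi>0_def wt_def mult_ac)
          also have "1 / sqrt (real (card (fib (f a)))) * sqrt (real (card (fib (f a))) / real (card G)) = 1 / sqrt (real (card G))"
          proof -
            have "sqrt (real (card (fib (f a)))) > 0" using cpos by simp
            then show ?thesis by (simp add: real_sqrt_divide)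
          qed
          finally show ?thesis using True by simp
        next
          case False
          then show ?thesis by (simp add: W_def)
        qed
        finally show ?thesis .
      qed
      have phG: "cnj (Ph d \<theta> M a) * Ph d \<theta> N (f a) = cnj g" if a: "a \<in> G" for a
      proof -
        have aM: "a < d ^ M" using a by (simp add: G_def)
        have fa: "f a < d ^ N" using f_prop[OF a] by (simp add: n1_def)
        have "Ph d \<theta> M a = (\<Prod>k<d. phase \<theta> k ^ (cnt d k N (f a) + s))"
          unfolding Ph_cnt[OF aM] using f_prop[OF a] by (intro prod.cong) auto
        also have "\<dots> = Ph d \<theta> N (f a) * g"
          unfolding Ph_cnt[OF fa] g_def by (simp add: power_add prod.distrib)
        finally have c1: "cnj (Ph d \<theta> M a) * Ph d \<theta> N (f a) = cnj g * (cnj (Ph d \<theta> N (f a)) * Ph d \<theta> N (f a))"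
          by (simp add: mult_ac)
        have c2: "cnj (Ph d \<theta> N (f a)) * Ph d \<theta> N (f a) = 1"
        proof -
          have "Ph d \<theta> N (f a) * cnj (Ph d \<theta> N (f a)) = complex_of_real ((cmod (Ph d \<theta> N (f a)))\<^sup>2)"
            by (rule complex_norm_square[symmetric])
          also have "\<dots> = 1" by (simp add: norm_Ph)
          finally show ?thesis by (simp add: mult.commute)
        qed
        show ?thesis using c1 c2 by simp
      qed
      have normg: "cmod g = 1" by (simp add: g_def prod_norm[symmetric] norm_power norm_phase)
      have sqpos: "sq > 0" using d by (simp add: sq_def)
      have Gpos: "sqrt (real (card G)) > 0" using cardG by simp
      have sqnz: "complex_of_real sq \<noteq> 0" "complex_of_real (sqrt (real (card G))) \<noteq> 0" using sqpos Gpos by auto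
      have "\<beta> 0 = (\<Sum>a<r. if a \<in> G then cnj g * complex_of_real (1 / (sq ^ M * sqrt (real (card G)))) else 0)"
        unfolding \<beta>_def proof (intro sum.cong refl)
        fix a assume "a \<in> {..<r}"
        then have a: "a < r" by simp
        have e: "psiM $$ (a,0) = Ph d \<theta> M a / complex_of_real sq ^ M"
          using a by (simp add: psiM_def r_def kron_pow_e sq_def)
        show "cnj (psiM $$ (a,0)) * w 0 a = (if a \<in> G then cnj g * complex_of_real (1 / (sq ^ M * sqrt (real (card G)))) else 0)"
        proof (cases "a \<in> G")
          case True
          have "cnj (psiM $$ (a,0)) * w 0 a = (cnj (Ph d \<theta> M a) * Ph d \<theta> N (f a)) * complex_of_real (1 / (sq ^ M * sqrt (real (card G))))"
            using True a sqnz by (simp add: e w0 field_simps)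
          then show ?thesis using True phG[OF True] by simp
        next
          case False then show ?thesis using a by (simp add: w0)
        qed
      qed
      also have "\<dots> = of_nat (card G) * (cnj g * complex_of_real (1 / (sq ^ M * sqrt (real (card G)))))"
        by (rule sum_indicator_const[OF Gr])
      finally have b0': "\<beta> 0 = of_nat (card G) * (cnj g * complex_of_real (1 / (sq ^ M * sqrt (real (card G)))))" .
      have "cmod (\<beta> 0) = real (card G) * (cmod (cnj g) * \<bar>1 / (sq ^ M * sqrt (real (card G)))\<bar>)"
        by (simp only: b0' norm_mult norm_of_nat norm_of_real)
      also have "\<dots> = real (card G) / (sq ^ M * sqrt (real (card G)))"
        using sqpos Gpos normg by (simp add: abs_of_pos)
      finally have b0: "cmod (\<beta> 0) = real (card G) / (sq ^ M * sqrt (real (card G)))" .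
      have "(real (card G) / (sq ^ M * sqrt (real (card G))))\<^sup>2 = real (card G) / real d ^ M"
      proof -
        have "(sq ^ M)\<^sup>2 = (sq\<^sup>2) ^ M" by (metis power_mult mult.commute)
        also have "sq\<^sup>2 = real d" by (simp add: sq_def)
        finally have sqM: "(sq ^ M)\<^sup>2 = real d ^ M" .
        have sG: "(sqrt (real (card G)))\<^sup>2 = real (card G)" by simp
        have "(real (card G) / (sq ^ M * sqrt (real (card G))))\<^sup>2 = (real (card G))\<^sup>2 / (real d ^ M * real (card G))"
          by (simp only: power_divide power_mult_distrib sqM sG)
        also have "\<dots> = real (card G) / real d ^ M" using cardG d by (simp add: power2_eq_square field_simps)
        finally show ?thesis .
      qed
      then show ?thesis using b0 by simp
    qed
    ultimately have "Re F \<ge> real (card G) / real d ^ M" using Fr by simp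
    moreover have "Im F = 0" using Fr by simp
    ultimately show ?thesis by simp
  qed
  show ?thesis
  proof (intro exI[of _ 1] exI[of _ \<sigma>] exI[of _ C] conjI)
    show "Defs.density (d ^ N * 1 * d ^ M) \<sigma>" using dens by (simp add: din_def)
    show "is_channel (d ^ N * 1 * d ^ M) (d ^ M) C" using chan by (simp add: din_def r_def)
    show "\<forall>\<theta> :: nat \<Rightarrow> real. (\<forall>k \<in> {1..d-1}. 0 \<le> \<theta> k \<and> \<theta> k < 2 * pi) \<longrightarrow>
              (let V = kron (kron_pow N (U_theta d \<theta>)) (1\<^sub>m (1 * d ^ M));
                   F = expval (kron_pow M (e_theta d \<theta>)) (C (V * \<sigma> * adj V))
               in Im F = 0 \<and>
                  Re F \<ge> 1 - 2 * real (M + 1) ^ (d * (d - 1) div 2)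
                               * exp (- (2 * real N ^ 2) / (real d ^ 2 * real M)))"
    proof (intro allI impI)
      fix \<theta> :: "nat \<Rightarrow> real"
      define V where "V = kron (kron_pow N (U_theta d \<theta>)) (1\<^sub>m (1 * d ^ M))"
      define F where "F = expval (kron_pow M (e_theta d \<theta>)) (C (V * \<sigma> * adj V))"
      have f1: "Im F = 0 \<and> Re F \<ge> real (card G) / real d ^ M" by (rule fid[OF F_def V_def])
      have tb: "real (card G) / real d ^ M \<ge> 1 - real d * exp (- (2 * real N ^ 2) / (real d ^ 2 * real M))"
        unfolding G_def using tail_bound[OF d assms(2) assms(3) ds] .
      have "real d * exp (- (2 * real N ^ 2) / (real d ^ 2 * real M))
            \<le> 2 * real (M + 1) ^ (d * (d - 1) div 2) * exp (- (2 * real N ^ 2) / (real d ^ 2 * real M))"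
        using d_le_bound[OF d, of M] assms(2,3) by (intro mult_right_mono) auto
      then have h: "Re F \<ge> 1 - 2 * real (M + 1) ^ (d * (d - 1) div 2)
                               * exp (- (2 * real N ^ 2) / (real d ^ 2 * real M))" using f1[THEN conjunct2] tb by linarith
      then show "let V = kron (kron_pow N (U_theta d \<theta>)) (1\<^sub>m (1 * d ^ M));
                   F = expval (kron_pow M (e_theta d \<theta>)) (C (V * \<sigma> * adj V))
               in Im F = 0 \<and>
                  Re F \<ge> 1 - 2 * real (M + 1) ^ (d * (d - 1) div 2)
                               * exp (- (2 * real N ^ 2) / (real d ^ 2 * real M))"
        using f1 h unfolding Let_def V_def[symmetric] F_def[symmetric] by simp
    qed
  qed simp
qed

end
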